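(* If $G$ is a $(3,2)$-critical graph that contains at least three odd cycles, then every two distinct odd cycles of $G$ have more than one common vertex.
   Context: All graphs are finite and simple. An odd cycle is a cycle (subgraph) of odd length. For a graph $G$, ${\rm es}_{\chi}(G)$ is the minimum number of edges of $G$ whose removal results in a spanning subgraph $G_1$ with $\chi(G_1)=\chi(G)-1$. $G$ is edge-stability critical if ${\rm es}_{\chi}(G-e)<{\rm es}_{\chi}(G)$ for every edge $e$. $G$ is $(3,2)$-critical if it is edge-stability critical with $\chi(G)=3$ and ${\rm es}_{\chi}(G)=2$. *)

theory Defs
  imports Main
begin

definition simple_graph :: "'a set \<Rightarrow> 'a set set \<Rightarrow> bool" where
  "simple_graph V E \<longleftrightarrow> finite V \<and>
     (\<forall>e\<in>E. \<exists>u v. e = {u, v} \<and> u \<noteq> v \<and> u \<in> V \<and> v \<in> V)"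

definition colorable :: "'a set \<Rightarrow> 'a set set \<Rightarrow> nat \<Rightarrow> bool" where
  "colorable V E k \<longleftrightarrow> (\<exists>f :: 'a \<Rightarrow> nat. (\<forall>v\<in>V. f v < k) \<and>
     (\<forall>u v. {u, v} \<in> E \<longrightarrow> f u \<noteq> f v))"

definition chromatic_number :: "'a set \<Rightarrow> 'a set set \<Rightarrow> nat" where
  "chromatic_number V E = (LEAST k. colorable V E k)"

definition es_chi :: "'a set \<Rightarrow> 'a set set \<Rightarrow> nat" where
  "es_chi V E = (LEAST n. \<exists>F. F \<subseteq> E \<and> card F = n \<and>
      chromatic_number V (E - F) = chromatic_number V E - 1)"

definition edge_stability_critical :: "'a set \<Rightarrow> 'a set set \<Rightarrow> bool" where
  "edge_stability_critical V E \<longleftrightarrow> (\<forall>e\<in>E. es_chi V (E - {e}) < es_chi V E)"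

definition crit_3_2 :: "'a set \<Rightarrow> 'a set set \<Rightarrow> bool" where
  "crit_3_2 V E \<longleftrightarrow> edge_stability_critical V E \<and> chromatic_number V E = 3 \<and> es_chi V E = 2"

definition cycle_edges :: "'a list \<Rightarrow> 'a set set" where
  "cycle_edges vs = {{vs ! i, vs ! ((i + 1) mod length vs)} | i. i < length vs}"

definition is_cycle :: "'a set \<Rightarrow> 'a set set \<Rightarrow> 'a list \<Rightarrow> bool" where
  "is_cycle V E vs \<longleftrightarrow> length vs \<ge> 3 \<and> distinct vs \<and> set vs \<subseteq> V \<and> cycle_edges vs \<subseteq> E"

definition odd_cycles :: "'a set \<Rightarrow> 'a set set \<Rightarrow> ('a set \<times> 'a set set) set" where
  "odd_cycles V E = {(set vs, cycle_edges vs) | vs. is_cycle V E vs \<and> odd (length vs)}"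

end

theory Submission imports Defs begin

definition ed :: "'a list \<Rightarrow> nat \<Rightarrow> 'a set" where
  "ed vs i = {vs!i, vs!((i+1) mod length vs)}"

definition pr :: "nat \<Rightarrow> nat \<Rightarrow> nat" where
  "pr n m = (if m = 0 then n - 1 else m - 1)"

lemma cycle_edges_ed: "cycle_edges vs = ed vs ` {..<length vs}"
  by (auto simp: cycle_edges_def ed_def)

lemma mod_suc: "i < n \<Longrightarrow> (i+1) mod n = (if Suc i = n then 0 else Suc i)"
  by auto

lemma pr_lt: "m < n \<Longrightarrow> pr n m < n" by (auto simp: pr_def)
lemma pr_suc: "m < n \<Longrightarrow> (pr n m + 1) mod n = m" by (auto simp: pr_def)
lemma suc_inj: "i < n \<Longrightarrow> j < n \<Longrightarrow> (j+1) mod n = (i+1) mod n \<Longrightarrow> i = (j::nat)"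
  using mod_suc[of i n] mod_suc[of j n] by (auto split: if_splits)

lemma suc_mod_lt[simp]: "i < (n::nat) \<Longrightarrow> Suc i mod n < n" by simp

lemma pr_suc2[simp]: "m < n \<Longrightarrow> Suc (pr n m) mod n = m" by (auto simp: pr_def)

lemma edge_in_set: "e \<in> cycle_edges vs \<Longrightarrow> x \<in> e \<Longrightarrow> x \<in> set vs"
  by (auto simp: cycle_edges_def)

lemma set_eq_union: "set vs = \<Union> (cycle_edges vs)"
proof
  show "set vs \<subseteq> \<Union> (cycle_edges vs)"
  proof
    fix x assume "x \<in> set vs"
    then obtain i where "i < length vs" "x = vs ! i" by (auto simp: in_set_conv_nth)
    then show "x \<in> \<Union> (cycle_edges vs)" by (auto simp: cycle_edges_def)
  qed
qed (auto simp: cycle_edges_def)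

lemma ed_neq:
  assumes "distinct vs" "length vs \<ge> 3" "k < length vs"
  shows "ed vs (pr (length vs) k) \<noteq> ed vs k"
proof
  let ?n = "length vs"
  assume eq: "ed vs (pr ?n k) = ed vs k"
  have p: "pr ?n k < ?n" using assms by (simp add: pr_lt)
  have "(pr ?n k + 1) mod ?n = k" using assms by (simp add: pr_suc)
  then have "ed vs (pr ?n k) = {vs ! pr ?n k, vs ! k}" by (simp add: ed_def)
  then have "vs ! pr ?n k \<in> ed vs k" using eq by auto
  then have "vs ! pr ?n k = vs ! k \<or> vs ! pr ?n k = vs ! ((k+1) mod ?n)" by (simp add: ed_def)
  moreover have "(k+1) mod ?n < ?n" using assms by simp
  ultimately have "pr ?n k = k \<or> pr ?n k = (k+1) mod ?n"
    using assms p by (auto simp: nth_eq_iff_index_eq)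
  then show False using assms mod_suc[of k ?n] by (auto simp: pr_def split: if_splits)
qed

lemma degree:
  assumes "distinct vs" "m < length vs" "e \<in> cycle_edges vs" "vs ! m \<in> e"
  shows "e = ed vs m \<or> e = ed vs (pr (length vs) m)"
proof -
  let ?n = "length vs"
  obtain j where j: "j < ?n" "e = ed vs j" using assms(3) by (auto simp: cycle_edges_ed)
  have "vs ! m = vs ! j \<or> vs ! m = vs ! ((j+1) mod ?n)" using assms(4) j by (simp add: ed_def)
  moreover have "(j+1) mod ?n < ?n" using j by simp
  ultimately have "m = j \<or> m = (j+1) mod ?n" using assms j by (auto simp: nth_eq_iff_index_eq)
  moreover have "m = (j+1) mod ?n \<Longrightarrow> j = pr ?n m"
    using j mod_suc[of j ?n] by (auto simp: pr_def split: if_splits)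
  ultimately show ?thesis using j by auto
qed

lemma transition:
  fixes n :: nat
  assumes "\<exists>i<n. Q i" "\<exists>j<n. \<not> Q j"
  shows "\<exists>i<n. Q i \<and> \<not> Q ((i+1) mod n)"
proof (rule ccontr)
  assume H: "\<not> ?thesis"
  obtain i0 where i0: "i0 < n" "Q i0" using assms by auto
  obtain j where j: "j < n" "\<not> Q j" using assms by auto
  have all: "Q ((i0 + k) mod n)" for k
  proof (induction k)
    case 0 then show ?case using i0 by simp
  next
    case (Suc k)
    have "(i0 + Suc k) mod n = ((i0 + k) mod n + 1) mod n" by (simp add: mod_Suc_eq)
    moreover have "(i0 + k) mod n < n" using i0 by simp
    ultimately show ?case using H Suc by auto
  qed
  have "(i0 + (j + n - i0)) mod n = j" using i0 j by simp
  then show False using all[of "j + n - i0"] j by simp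
qed

lemma odd_not_bip:
  assumes "length vs \<ge> 3" "odd (length vs)" "set vs \<subseteq> V" "cycle_edges vs \<subseteq> H"
  shows "\<not> colorable V H 2"
proof
  let ?n = "length vs"
  assume "colorable V H 2"
  then obtain f :: "'a \<Rightarrow> nat" where f: "\<forall>v\<in>V. f v < 2" "\<forall>u v. {u, v} \<in> H \<longrightarrow> f u \<noteq> f v"
    by (auto simp: colorable_def)
  have lt: "i < ?n \<Longrightarrow> f (vs ! i) < 2" for i using f(1) assms(3) nth_mem[of i vs] by blast
  have ne: "i < ?n \<Longrightarrow> f (vs ! i) \<noteq> f (vs ! ((i+1) mod ?n))" for i
    using f(2) assms(4) by (auto simp: cycle_edges_def)
  have alt: "i < ?n \<Longrightarrow> f (vs ! i) = (f (vs ! 0) + i) mod 2" for i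
  proof (induction i)
    case 0 then show ?case using lt[of 0] by simp
  next
    case (Suc i)
    then have "i < ?n" by simp
    have "(i+1) mod ?n = Suc i" using Suc.prems by simp
    then have "f (vs ! i) \<noteq> f (vs ! Suc i)" using ne[OF \<open>i < ?n\<close>] by simp
    moreover have "f (vs ! Suc i) < 2" using lt Suc.prems by blast
    moreover have "f (vs ! i) < 2" using lt \<open>i < ?n\<close> by blast
    ultimately show ?case using Suc.IH \<open>i < ?n\<close> by presburger
  qed
  have n1: "?n - 1 < ?n" using assms by simp
  have "((?n - 1) + 1) mod ?n = 0" using assms by simp
  then have A1: "f (vs ! (?n - 1)) \<noteq> f (vs ! 0)" using ne[OF n1] by simp
  have A2: "f (vs ! (?n - 1)) = (f (vs ! 0) + (?n - 1)) mod 2" using alt n1 by blast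
  have "even (?n - 1)" using assms by simp
  then obtain q where q: "?n - 1 = 2 * q" by blast
  have l0: "f (vs ! 0) < 2" by (rule lt) (use n1 in linarith)
  have "(f (vs ! 0) + (?n - 1)) mod 2 = (f (vs ! 0) + 2 * q) mod 2" by (simp only: q)
  also have "\<dots> = f (vs ! 0) mod 2" by simp
  also have "\<dots> = f (vs ! 0)" using l0 by simp
  finally have "(f (vs ! 0) + (?n - 1)) mod 2 = f (vs ! 0)" .
  then show False using A1 A2 by simp
qed

lemma pr_of_suc: "i < n \<Longrightarrow> pr n ((i+1) mod n) = i"
  using mod_suc[of i n] by (auto simp: pr_def split: if_splits)

lemma split_cycle:
  assumes "distinct vs" "length vs \<ge> 3" "cycle_edges vs \<subseteq> E1 \<union> E2"
    "\<forall>e\<in>E1. e \<subseteq> A" "\<forall>e\<in>E2. e \<subseteq> B" "finite A" "card (A \<inter> B) \<le> 1"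
  shows "cycle_edges vs \<subseteq> E1 \<or> cycle_edges vs \<subseteq> E2"
proof (rule ccontr)
  let ?n = "length vs"
  assume H: "\<not> ?thesis"
  have ex1: "\<exists>i<?n. ed vs i \<in> E1" using H assms(3) by (auto simp: cycle_edges_ed)
  have ex2: "\<exists>j<?n. \<not> ed vs j \<in> E1" using H by (auto simp: cycle_edges_ed)
  obtain i where i: "i < ?n" "ed vs i \<in> E1" "\<not> ed vs ((i+1) mod ?n) \<in> E1"
    using transition[of ?n "\<lambda>i. ed vs i \<in> E1", OF ex1 ex2] by blast
  obtain j where j: "j < ?n" "\<not> ed vs j \<in> E1" "ed vs ((j+1) mod ?n) \<in> E1"
    using transition[of ?n "\<lambda>i. \<not> ed vs i \<in> E1"] ex1 ex2 by auto
  have "ed vs ((i+1) mod ?n) \<in> cycle_edges vs"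
    unfolding cycle_edges_ed by (rule imageI) (simp add: i)
  then have ci: "ed vs ((i+1) mod ?n) \<in> E2"
    using i assms(3) by blast
  have cj: "ed vs j \<in> E2"
    using j assms(3) by (auto simp: cycle_edges_ed)
  define a where "a = vs ! ((i+1) mod ?n)"
  define b where "b = vs ! ((j+1) mod ?n)"
  have "a \<in> ed vs i" "a \<in> ed vs ((i+1) mod ?n)" unfolding a_def ed_def by auto
  then have aAB: "a \<in> A \<inter> B" using i(2) ci assms(4,5) by blast
  have "b \<in> ed vs j" "b \<in> ed vs ((j+1) mod ?n)" unfolding b_def ed_def by auto
  then have bAB: "b \<in> A \<inter> B" using j(3) cj assms(4,5) by blast
  have "i \<noteq> j" using i j by auto
  then have "(i+1) mod ?n \<noteq> (j+1) mod ?n" using suc_inj[of i ?n j] i j by auto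
  then have "a \<noteq> b" unfolding a_def b_def using assms(1) i j
    by (simp add: nth_eq_iff_index_eq)
  then have "card {a, b} = 2" by simp
  moreover have "card {a, b} \<le> card (A \<inter> B)"
    using aAB bAB assms(6) by (intro card_mono) auto
  ultimately show False using assms(7) by simp
qed

lemma sub_cycle_eq:
  assumes "distinct vs1" "length vs1 \<ge> 3" "distinct vs3" "length vs3 \<ge> 3"
    "cycle_edges vs3 \<subseteq> cycle_edges vs1"
  shows "cycle_edges vs3 = cycle_edges vs1"
proof (rule ccontr)
  let ?n = "length vs1"
  let ?m = "length vs3"
  assume H: "\<not> ?thesis"
  have h0: "ed vs3 0 \<in> cycle_edges vs3" using assms by (auto simp: cycle_edges_ed)
  then have "ed vs3 0 \<in> ed vs1 ` {..<?n}" using assms(5) by (auto simp: cycle_edges_ed)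
  then obtain i0 where "i0 < ?n" "ed vs3 0 = ed vs1 i0" by auto
  then have ex1: "\<exists>i<?n. ed vs1 i \<in> cycle_edges vs3" using h0 by auto
  have ex2: "\<exists>j<?n. \<not> ed vs1 j \<in> cycle_edges vs3" using H assms(5) by (auto simp: cycle_edges_ed)
  obtain i where i: "i < ?n" "ed vs1 i \<in> cycle_edges vs3" "\<not> ed vs1 ((i+1) mod ?n) \<in> cycle_edges vs3"
    using transition[of ?n "\<lambda>i. ed vs1 i \<in> cycle_edges vs3", OF ex1 ex2] by blast
  define m where "m = (i+1) mod ?n"
  have m: "m < ?n" using i unfolding m_def by simp
  have pm: "pr ?n m = i" using i pr_of_suc unfolding m_def by blast
  define v where "v = vs1 ! m"
  have "v \<in> ed vs1 i" unfolding v_def m_def ed_def by simp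
  then have "v \<in> set vs3" by (rule edge_in_set[OF i(2)])
  then obtain k where k: "k < ?m" "v = vs3 ! k" by (auto simp: in_set_conv_nth)
  have e1: "ed vs3 k \<in> cycle_edges vs3" using k by (auto simp: cycle_edges_ed)
  have e2: "ed vs3 (pr ?m k) \<in> cycle_edges vs3" using k pr_lt by (auto simp: cycle_edges_ed)
  have v1: "v \<in> ed vs3 k" using k by (simp add: ed_def)
  have v2: "v \<in> ed vs3 (pr ?m k)" using k by (simp add: ed_def)
  have d1: "ed vs3 k = ed vs1 m \<or> ed vs3 k = ed vs1 i"
  proof -
    have "ed vs3 k \<in> cycle_edges vs1" using e1 assms(5) by blast
    moreover have "vs1 ! m \<in> ed vs3 k" using v1 unfolding v_def .
    ultimately have "ed vs3 k = ed vs1 m \<or> ed vs3 k = ed vs1 (pr ?n m)"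
      by (rule degree[OF assms(1) m])
    then show ?thesis using pm by simp
  qed
  have d2: "ed vs3 (pr ?m k) = ed vs1 m \<or> ed vs3 (pr ?m k) = ed vs1 i"
  proof -
    have "ed vs3 (pr ?m k) \<in> cycle_edges vs1" using e2 assms(5) by blast
    moreover have "vs1 ! m \<in> ed vs3 (pr ?m k)" using v2 unfolding v_def .
    ultimately have "ed vs3 (pr ?m k) = ed vs1 m \<or> ed vs3 (pr ?m k) = ed vs1 (pr ?n m)"
      by (rule degree[OF assms(1) m])
    then show ?thesis using pm by simp
  qed
  have "ed vs3 (pr ?m k) \<noteq> ed vs3 k" using ed_neq[OF assms(3,4) k(1)] .
  then have "ed vs1 m \<in> cycle_edges vs3" using d1 d2 e1 e2 by auto
  then show False using i(3) unfolding m_def by simp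
qed

lemma col_mono_k: "colorable V H k \<Longrightarrow> k \<le> k' \<Longrightarrow> colorable V H k'"
  unfolding colorable_def by (meson order_less_le_trans)

lemma col_sub: "colorable V H k \<Longrightarrow> H' \<subseteq> H \<Longrightarrow> colorable V H' k"
  unfolding colorable_def by blast

lemma col_ex:
  assumes "finite V" "\<forall>e\<in>H. \<exists>u v. e = {u, v} \<and> u \<noteq> v \<and> u \<in> V \<and> v \<in> V"
  shows "colorable V H (card V)"
proof -
  obtain h where h: "bij_betw h V {0..<card V}" using ex_bij_betw_finite_nat[OF assms(1)] by blast
  have "\<forall>v\<in>V. h v < card V" using h by (auto simp: bij_betw_def)
  moreover have "\<forall>u v. {u, v} \<in> H \<longrightarrow> h u \<noteq> h v"
  proof (intro allI impI)
    fix u v assume "{u, v} \<in> H"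
    then obtain a b where "{u, v} = {a, b}" "a \<noteq> b" "a \<in> V" "b \<in> V" using assms(2) by blast
    then have "u \<noteq> v" "u \<in> V" "v \<in> V" by (auto simp: doubleton_eq_iff)
    then show "h u \<noteq> h v" using h by (auto simp: bij_betw_def inj_on_def)
  qed
  ultimately show ?thesis unfolding colorable_def by blast
qed

lemma chrom_col:
  assumes "finite V" "\<forall>e\<in>H. \<exists>u v. e = {u, v} \<and> u \<noteq> v \<and> u \<in> V \<and> v \<in> V"
  shows "colorable V H (chromatic_number V H)"
  unfolding chromatic_number_def using col_ex[OF assms] by (rule LeastI)

lemma chrom_le: "colorable V H k \<Longrightarrow> chromatic_number V H \<le> k"
  unfolding chromatic_number_def by (rule Least_le)

lemma col1: "colorable V H k \<Longrightarrow> k \<le> 1 \<Longrightarrow> {u, v} \<in> H \<Longrightarrow> u \<in> V \<Longrightarrow> v \<in> V \<Longrightarrow> False"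
  unfolding colorable_def by (metis less_one order_less_le_trans)

lemma chrom_single:
  assumes "u \<noteq> v" "u \<in> V" "v \<in> V"
  shows "chromatic_number V {{u, v}} = 2"
  unfolding chromatic_number_def
proof (rule Least_equality)
  show "colorable V {{u, v}} 2"
    unfolding colorable_def
    by (rule exI[of _ "\<lambda>x. if x = u then 0 else 1"]) (use assms in \<open>auto simp: doubleton_eq_iff\<close>)
next
  fix y assume "colorable V {{u, v}} y"
  then show "2 \<le> y" using col1[of V "{{u, v}}" y u v] assms by fastforce
qed


lemma key_claim:
  fixes V :: "'a set" and E :: "'a set set"
  assumes sg: "simple_graph V E" and cr: "crit_3_2 V E"
    and e: "e \<in> E" and g: "g \<in> E" "g \<noteq> e"
  shows "\<exists>f. colorable V (E - {e, f}) 2"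
proof -
  have finV: "finite V" and edg: "\<forall>e\<in>E. \<exists>u v. e = {u, v} \<and> u \<noteq> v \<and> u \<in> V \<and> v \<in> V"
    using sg by (auto simp: simple_graph_def)
  have edgS: "\<forall>e\<in>H. \<exists>u v. e = {u, v} \<and> u \<noteq> v \<and> u \<in> V \<and> v \<in> V" if "H \<subseteq> E" for H
    using edg that by blast
  have "E \<subseteq> Pow V" using edg by auto
  then have finE: "finite E" using finV by (meson finite_Pow_iff finite_subset)
  have chr: "chromatic_number V E = 3" and es: "es_chi V E = 2"
    and crit: "\<forall>e\<in>E. es_chi V (E - {e}) < es_chi V E"
    using cr by (auto simp: crit_3_2_def edge_stability_critical_def)
  obtain u v where uv: "g = {u, v}" "u \<noteq> v" "u \<in> V" "v \<in> V" using edg g by blast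
  define c where "c = chromatic_number V (E - {e})"
  have col3: "colorable V E 3" using chrom_col[OF finV edg] chr by simp
  have c3: "c \<le> 3" unfolding c_def by (rule chrom_le, rule col_sub[OF col3]) auto
  have colc: "colorable V (E - {e}) c" unfolding c_def by (rule chrom_col[OF finV edgS]) auto
  have c2: "c \<ge> 2"
  proof (rule ccontr)
    assume "\<not> c \<ge> 2"
    then have "c \<le> 1" by simp
    then show False using col1[OF colc, of u v] uv g by auto
  qed
  have cn2: "c \<noteq> 2"
  proof
    assume "c = 2"
    then have "\<exists>F. F \<subseteq> E \<and> card F = 1 \<and> chromatic_number V (E - F) = chromatic_number V E - 1"
      using e chr unfolding c_def by (intro exI[of _ "{e}"]) auto
    then have "es_chi V E \<le> 1" unfolding es_chi_def by (rule Least_le)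
    then show False using es by simp
  qed
  have c33: "c = 3" using c3 c2 cn2 by simp
  let ?P = "\<lambda>n. \<exists>F. F \<subseteq> E - {e} \<and> card F = n \<and>
      chromatic_number V (E - {e} - F) = chromatic_number V (E - {e}) - 1"
  have "E - {e} - (E - {e} - {g}) = {g}" using g by auto
  then have "?P (card (E - {e} - {g}))"
    using c33 chrom_single[OF uv(2,3,4)] uv(1) unfolding c_def
    by (intro exI[of _ "E - {e} - {g}"]) auto
  then have "?P (es_chi V (E - {e}))" unfolding es_chi_def by (rule LeastI)
  then obtain F where F: "F \<subseteq> E - {e}" "card F = es_chi V (E - {e})"
    "chromatic_number V (E - {e} - F) = 2"
    using c33 unfolding c_def by auto
  have "card F \<le> 1" using F(2) crit e es by fastforce
  moreover have finF: "finite F" using F(1) finE by (meson finite_Diff finite_subset)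
  ultimately have one: "\<forall>a\<in>F. \<forall>b\<in>F. a = b" using card_le_Suc0_iff_eq[OF finF] by simp
  have colF: "colorable V (E - {e} - F) 2"
    using chrom_col[OF finV edgS, of "E - {e} - F"] F(3) by auto
  show ?thesis
  proof (cases "F = {}")
    case True
    then show ?thesis using colF by (intro exI[of _ e]) (auto elim: col_sub)
  next
    case False
    then obtain f where "f \<in> F" by blast
    then have "F = {f}" using one by blast
    then show ?thesis using colF by (intro exI[of _ f]) (auto elim: col_sub)
  qed
qed


theorem lemma2p6:
  fixes V :: "'a set" and E :: "'a set set"
  assumes "simple_graph V E"
    and "crit_3_2 V E"
    and "\<exists>C1 C2 C3. C1 \<in> odd_cycles V E \<and> C2 \<in> odd_cycles V E \<and> C3 \<in> odd_cycles V E \<and>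
           C1 \<noteq> C2 \<and> C1 \<noteq> C3 \<and> C2 \<noteq> C3"
  shows "\<forall>C1\<in>odd_cycles V E. \<forall>C2\<in>odd_cycles V E. C1 \<noteq> C2 \<longrightarrow> card (fst C1 \<inter> fst C2) > 1"
proof (intro ballI impI)
  fix C1 C2 assume C1: "C1 \<in> odd_cycles V E" and C2: "C2 \<in> odd_cycles V E" and ne: "C1 \<noteq> C2"
  show "card (fst C1 \<inter> fst C2) > 1"
  proof (rule ccontr)
    assume "\<not> card (fst C1 \<inter> fst C2) > 1"
    then have cardle: "card (fst C1 \<inter> fst C2) \<le> 1" by simp
    obtain vs1 where v1: "C1 = (set vs1, cycle_edges vs1)" "is_cycle V E vs1" "odd (length vs1)"
      using C1 by (auto simp: odd_cycles_def)
    obtain vs2 where v2: "C2 = (set vs2, cycle_edges vs2)" "is_cycle V E vs2" "odd (length vs2)"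
      using C2 by (auto simp: odd_cycles_def)
    have c1: "distinct vs1" "length vs1 \<ge> 3" "set vs1 \<subseteq> V" "cycle_edges vs1 \<subseteq> E"
      using v1 by (auto simp: is_cycle_def)
    have c2: "distinct vs2" "length vs2 \<ge> 3" "set vs2 \<subseteq> V" "cycle_edges vs2 \<subseteq> E"
      using v2 by (auto simp: is_cycle_def)
    have AB: "card (set vs1 \<inter> set vs2) \<le> 1" using cardle v1 v2 by simp
    have disj: "cycle_edges vs1 \<inter> cycle_edges vs2 = {}"
    proof (rule ccontr)
      assume "cycle_edges vs1 \<inter> cycle_edges vs2 \<noteq> {}"
      then obtain x where x1: "x \<in> cycle_edges vs1" and x2: "x \<in> cycle_edges vs2" by blast
      then obtain i where i: "i < length vs1" "x = ed vs1 i" by (auto simp: cycle_edges_ed)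
      define a where "a = vs1 ! i"
      define b where "b = vs1 ! ((i+1) mod length vs1)"
      have xab: "x = {a, b}" using i unfolding a_def b_def ed_def by simp
      have "i \<noteq> (i+1) mod length vs1" using i c1 mod_suc[of i "length vs1"] by auto
      then have "a \<noteq> b" unfolding a_def b_def using c1 i by (simp add: nth_eq_iff_index_eq)
      then have "card {a, b} = 2" by simp
      moreover have "{a, b} \<subseteq> set vs1 \<inter> set vs2"
        using edge_in_set[OF x1] edge_in_set[OF x2] xab by auto
      then have "card {a, b} \<le> card (set vs1 \<inter> set vs2)" by (intro card_mono) auto
      ultimately show False using AB by simp
    qed
    have allE: "E \<subseteq> cycle_edges vs1 \<union> cycle_edges vs2"
    proof
      fix e assume e: "e \<in> E"
      have "ed vs1 0 \<noteq> ed vs1 1" using ed_neq[OF c1(1,2), of 1] c1(2) by (simp add: pr_def)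
      moreover have "(0::nat) \<in> {..<length vs1}" "(1::nat) \<in> {..<length vs1}" using c1(2) by auto
      then have "ed vs1 0 \<in> cycle_edges vs1" "ed vs1 1 \<in> cycle_edges vs1"
        unfolding cycle_edges_ed by blast+
      then have "ed vs1 0 \<in> E" "ed vs1 1 \<in> E" using c1(4) by blast+
      ultimately obtain g where g: "g \<in> E" "g \<noteq> e" by metis
      obtain f where f: "colorable V (E - {e, f}) 2" using key_claim[OF assms(1,2) e g] by blast
      have "\<not> cycle_edges vs1 \<subseteq> E - {e, f}"
        using f odd_not_bip[OF c1(2) v1(3) c1(3)] by blast
      then have h1: "e \<in> cycle_edges vs1 \<or> f \<in> cycle_edges vs1" using c1(4) by blast
      have "\<not> cycle_edges vs2 \<subseteq> E - {e, f}"
        using f odd_not_bip[OF c2(2) v2(3) c2(3)] by blast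
      then have h2: "e \<in> cycle_edges vs2 \<or> f \<in> cycle_edges vs2" using c2(4) by blast
      show "e \<in> cycle_edges vs1 \<union> cycle_edges vs2" using h1 h2 disj by blast
    qed
    obtain C3 where C3: "C3 \<in> odd_cycles V E" "C3 \<noteq> C1" "C3 \<noteq> C2" using assms(3) by blast
    obtain vs3 where v3: "C3 = (set vs3, cycle_edges vs3)" "is_cycle V E vs3" "odd (length vs3)"
      using C3 by (auto simp: odd_cycles_def)
    have c3: "distinct vs3" "length vs3 \<ge> 3" "set vs3 \<subseteq> V" "cycle_edges vs3 \<subseteq> E"
      using v3 by (auto simp: is_cycle_def)
    have "cycle_edges vs3 \<subseteq> cycle_edges vs1 \<or> cycle_edges vs3 \<subseteq> cycle_edges vs2"
      by (rule split_cycle[OF c3(1,2) _ _ _ _ AB])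
        (use c3(4) allE edge_in_set in auto)
    then show False
    proof
      assume "cycle_edges vs3 \<subseteq> cycle_edges vs1"
      then have "cycle_edges vs3 = cycle_edges vs1" using sub_cycle_eq c1 c3 by blast
      then have "C3 = C1" using v1 v3 set_eq_union by metis
      then show False using C3 by simp
    next
      assume "cycle_edges vs3 \<subseteq> cycle_edges vs2"
      then have "cycle_edges vs3 = cycle_edges vs2" using sub_cycle_eq c2 c3 by blast
      then have "C3 = C2" using v2 v3 set_eq_union by metis
      then show False using C3 by simp
    qed
  qed
qed

end
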